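(* A set system $H=(U,(A_1,\dots,A_m))$ is harmonic if and only if $|H_{I_1,I_2}|=|H_{J_1,J_2}|$ for all pairs $(I_1,I_2)\sim(J_1,J_2)$.
   Context: For $I_1,I_2\subseteq[m]$, $H_{I_1,I_2}=\bigcap_{i\in I_1}A_i\cap\bigcap_{i\in I_2}(U\setminus A_i)$ (an empty intersection is $U$), and $H_I=H_{I,\emptyset}$. The run decomposition of a finite set $I$ of positive integers is the partition formed by the sizes, in nonincreasing order, of the maximal runs of consecutive integers in $I$. $H$ is harmonic if $|H_I|=|H_J|$ whenever $I,J\subseteq[m]$ have the same run decomposition. Pairs $(I_1,I_2)$, $(J_1,J_2)$ of subsets of $[m]$ with $I_1\cap I_2=J_1\cap J_2=\emptyset$ are equivalent, written $(I_1,I_2)\sim(J_1,J_2)$, if there is a bijection $\sigma:[m]\to[m]$ with $\sigma(I_1)=J_1$, $\sigma(I_2)=J_2$, and for all $i,j\in I_1\cup I_2$, $|\sigma(i)-\sigma(j)|=1$ iff $|i-j|=1$. *)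

theory Defs
  imports Main "HOL-Library.Multiset"
begin

text \<open>A set system H = (U, (A_1,...,A_m)) is given by a ground set U, a family
  A :: nat => 'a set (only A 1, ..., A m are relevant) and m.\<close>

definition H2 :: "'a set \<Rightarrow> (nat \<Rightarrow> 'a set) \<Rightarrow> nat set \<Rightarrow> nat set \<Rightarrow> 'a set" where
  "H2 U A I1 I2 = {x \<in> U. (\<forall>i\<in>I1. x \<in> A i) \<and> (\<forall>i\<in>I2. x \<in> U - A i)}"

definition H1 :: "'a set \<Rightarrow> (nat \<Rightarrow> 'a set) \<Rightarrow> nat set \<Rightarrow> 'a set" where
  "H1 U A I = H2 U A I {}"

definition runs :: "nat set \<Rightarrow> nat set set" where
  "runs I = {R. \<exists>a b. a \<le> b \<and> R = {a..b} \<and> R \<subseteq> I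
                 \<and> (\<forall>x. Suc x = a \<longrightarrow> x \<notin> I) \<and> Suc b \<notin> I}"

definition run_decomp :: "nat set \<Rightarrow> nat list" where
  "run_decomp I = rev (sorted_list_of_multiset (image_mset card (mset_set (runs I))))"

definition harmonic :: "'a set \<Rightarrow> (nat \<Rightarrow> 'a set) \<Rightarrow> nat \<Rightarrow> bool" where
  "harmonic U A m \<longleftrightarrow> (\<forall>I J. I \<subseteq> {1..m} \<longrightarrow> J \<subseteq> {1..m} \<longrightarrow>
      run_decomp I = run_decomp J \<longrightarrow> card (H1 U A I) = card (H1 U A J))"

definition pair_equiv :: "nat \<Rightarrow> nat set \<Rightarrow> nat set \<Rightarrow> nat set \<Rightarrow> nat set \<Rightarrow> bool" where
  "pair_equiv m I1 I2 J1 J2 \<longleftrightarrow> (\<exists>\<sigma>. bij_betw \<sigma> {1..m} {1..m} \<and> \<sigma> ` I1 = J1 \<and> \<sigma> ` I2 = J2 \<and>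
      (\<forall>i\<in>I1 \<union> I2. \<forall>j\<in>I1 \<union> I2.
          \<bar>int (\<sigma> i) - int (\<sigma> j)\<bar> = 1 \<longleftrightarrow> \<bar>int i - int j\<bar> = 1))"

end

theory Submission
  imports Defs
begin


lemma runs_D: "R \<in> runs S \<Longrightarrow> \<exists>a b. a \<le> b \<and> R = {a..b} \<and> R \<subseteq> S \<and> (\<forall>x. Suc x = a \<longrightarrow> x \<notin> S) \<and> Suc b \<notin> S"
  by (simp add: runs_def)

lemma runs_I: "a \<le> b \<Longrightarrow> {a..b} \<subseteq> S \<Longrightarrow> (\<forall>x. Suc x = a \<longrightarrow> x \<notin> S) \<Longrightarrow> Suc b \<notin> S \<Longrightarrow> {a..b} \<in> runs S"
  by (auto simp: runs_def)

lemma runs_sub: "R \<in> runs S \<Longrightarrow> R \<subseteq> S"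
  using runs_D by blast

lemma runs_ne: "R \<in> runs S \<Longrightarrow> R \<noteq> {}"
  using runs_D by fastforce

lemma runs_finite: "finite S \<Longrightarrow> finite (runs S)"
  by (rule finite_subset[of _ "Pow S"]) (auto dest: runs_sub)

lemma run_closed:
  assumes "R \<in> runs S" "x \<in> R" "y \<in> S" "\<bar>int y - int x\<bar> = 1"
  shows "y \<in> R"
proof -
  obtain a b where ab: "a \<le> b" "R = {a..b}" "R \<subseteq> S" "\<forall>x. Suc x = a \<longrightarrow> x \<notin> S" "Suc b \<notin> S"
    using runs_D[OF assms(1)] by blast
  have "y = Suc x \<or> x = Suc y" using assms(4) by linarith
  then show ?thesis
  proof
    assume "y = Suc x"
    then show ?thesis using ab assms(2,3) by (cases "x < b") auto
  next
    assume "x = Suc y"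
    then show ?thesis using ab assms(2,3) by (cases "a < x") auto
  qed
qed

lemma runs_disj:
  assumes "R1 \<in> runs S" "R2 \<in> runs S" "x \<in> R1" "x \<in> R2"
  shows "R1 = R2"
proof -
  obtain a1 b1 where 1: "a1 \<le> b1" "R1 = {a1..b1}" "R1 \<subseteq> S" "\<forall>x. Suc x = a1 \<longrightarrow> x \<notin> S" "Suc b1 \<notin> S"
    using runs_D[OF assms(1)] by blast
  obtain a2 b2 where 2: "a2 \<le> b2" "R2 = {a2..b2}" "R2 \<subseteq> S" "\<forall>x. Suc x = a2 \<longrightarrow> x \<notin> S" "Suc b2 \<notin> S"
    using runs_D[OF assms(2)] by blast
  have "\<not> a1 < a2"
  proof
    assume "a1 < a2"
    then have "a2 - 1 \<in> R1" using 1 2 assms by auto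
    then show False using 1 2 \<open>a1 < a2\<close> by (metis Suc_pred' gr_zeroI less_zeroE subsetD)
  qed
  moreover have "\<not> a2 < a1"
  proof
    assume "a2 < a1"
    then have "a1 - 1 \<in> R2" using 1 2 assms by auto
    then show False using 1 2 \<open>a2 < a1\<close> by (metis Suc_pred' gr_zeroI less_zeroE subsetD)
  qed
  moreover have "\<not> b1 < b2"
  proof
    assume "b1 < b2"
    then have "Suc b1 \<in> R2" using 1 2 assms by auto
    then show False using 1 2 by auto
  qed
  moreover have "\<not> b2 < b1"
  proof
    assume "b2 < b1"
    then have "Suc b2 \<in> R1" using 1 2 assms by auto
    then show False using 1 2 by auto
  qed
  ultimately show ?thesis using 1 2 by (metis linorder_neqE_nat)
qed

lemma runs_ex:
  assumes "finite S" "x \<in> S"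
  shows "\<exists>R\<in>runs S. x \<in> R"
proof -
  define L where "L = {a. a \<le> x \<and> {a..x} \<subseteq> S}"
  define B where "B = {b. x \<le> b \<and> {x..b} \<subseteq> S}"
  have fL: "finite L" unfolding L_def by (rule finite_subset[of _ "{..x}"]) auto
  have fB: "finite B" unfolding B_def by (rule finite_subset[OF _ assms(1)]) auto
  have xL: "x \<in> L" and xB: "x \<in> B" using assms by (auto simp: L_def B_def)
  define a where "a = Min L"
  define b where "b = Max B"
  have aL: "a \<in> L" using fL xL a_def Min_in by blast
  have bB: "b \<in> B" using fB xB b_def Max_in by blast
  have "{a..b} \<in> runs S"
  proof (rule runs_I)
    show "a \<le> b" using aL bB by (auto simp: L_def B_def)
    show "{a..b} \<subseteq> S" using aL bB unfolding L_def B_def by auto (metis atLeastAtMost_iff nat_le_linear subsetD)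
    show "\<forall>y. Suc y = a \<longrightarrow> y \<notin> S"
    proof (intro allI impI notI)
      fix y assume "Suc y = a" "y \<in> S"
      have "a \<le> x" using aL unfolding L_def by simp
      then have "{y..x} = insert y {a..x}" using \<open>Suc y = a\<close> by auto
      then have "y \<in> L" using aL \<open>y \<in> S\<close> \<open>Suc y = a\<close> \<open>a \<le> x\<close> unfolding L_def by auto
      then have "a \<le> y" using fL a_def by simp
      then show False using \<open>Suc y = a\<close> by simp
    qed
    show "Suc b \<notin> S"
    proof
      assume "Suc b \<in> S"
      then have "Suc b \<in> B" using bB unfolding B_def by (auto simp: le_Suc_eq)
      then have "Suc b \<le> b" using fB b_def by simp
      then show False by simp
    qed
  qed
  moreover have "x \<in> {a..b}" using aL bB by (auto simp: L_def B_def)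
  ultimately show ?thesis by blast
qed

lemma runs_Union: "finite S \<Longrightarrow> \<Union>(runs S) = S"
  using runs_ex runs_sub by blast

definition rof :: "nat set \<Rightarrow> nat \<Rightarrow> nat set" where
  "rof S x = (THE R. R \<in> runs S \<and> x \<in> R)"

lemma rof_eq: "R \<in> runs S \<Longrightarrow> x \<in> R \<Longrightarrow> rof S x = R"
  unfolding rof_def by (metis (mono_tags, lifting) runs_disj the_equality)

lemma rof_in: "finite S \<Longrightarrow> x \<in> S \<Longrightarrow> rof S x \<in> runs S \<and> x \<in> rof S x"
  using runs_ex rof_eq by metis



lemma image_run_interval:
  assumes inj: "inj_on \<sigma> S"
    and adj: "\<forall>i\<in>S. \<forall>j\<in>S. \<bar>int (\<sigma> i) - int (\<sigma> j)\<bar> = 1 \<longleftrightarrow> \<bar>int i - int j\<bar> = 1"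
    and ab: "a \<le> b" "{a..b} \<subseteq> S"
  shows "\<exists>c d. c \<le> d \<and> \<sigma> ` {a..b} = {c..d}"
proof -
  define e :: int where "e = (if a < b then int (\<sigma> (Suc a)) - int (\<sigma> a) else 1)"
  have e: "e = 1 \<or> e = -1"
  proof (cases "a < b")
    case True
    then have "Suc a \<in> S" "a \<in> S" using ab by auto
    then have "\<bar>int (\<sigma> (Suc a)) - int (\<sigma> a)\<bar> = 1" using adj by auto
    then show ?thesis using True e_def by auto
  qed (simp add: e_def)
  have lin: "\<forall>k\<le>n. int (\<sigma> (a+k)) = int (\<sigma> a) + e * int k" if "n \<le> b - a" for n
    using that
  proof (induction n)
    case 0 then show ?case by simp
  next
    case (Suc n)
    then have IH: "\<forall>k\<le>n. int (\<sigma> (a+k)) = int (\<sigma> a) + e * int k" by simp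
    have new: "int (\<sigma> (a + Suc n)) = int (\<sigma> a) + e * int (Suc n)"
    proof (cases n)
      case 0
      then have "a < b" using Suc.prems by simp
      then show ?thesis using 0 e_def by simp
    next
      case (Suc n')
      have inS: "a + Suc n \<in> S" "a + n \<in> S" "a + n' \<in> S" using Suc.prems ab Suc by auto
      have "\<bar>int (\<sigma> (a + Suc n)) - int (\<sigma> (a+n))\<bar> = 1" using adj inS by auto
      moreover have "\<sigma> (a + Suc n) \<noteq> \<sigma> (a + n')"
      proof
        assume "\<sigma> (a + Suc n) = \<sigma> (a + n')"
        then have "a + Suc n = a + n'" using inj inS by (meson inj_onD)
        then show False using Suc by simp
      qed
      moreover have "int (\<sigma> (a+n)) = int (\<sigma> a) + e * int n" "int (\<sigma> (a+n')) = int (\<sigma> a) + e * int n'"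
        using IH Suc by auto
      ultimately show ?thesis using e Suc by (auto simp: algebra_simps)
    qed
    show ?case using IH new by (metis le_Suc_eq)
  qed
  have L: "int (\<sigma> (a+k)) = int (\<sigma> a) + e * int k" if "k \<le> b - a" for k
    using lin[OF that] by simp
  from e show ?thesis
  proof
    assume e1: "e = 1"
    have "\<sigma> ` {a..b} = {\<sigma> a..\<sigma> a + (b - a)}"
    proof
      show "\<sigma> ` {a..b} \<subseteq> {\<sigma> a..\<sigma> a + (b - a)}"
      proof
        fix z assume "z \<in> \<sigma> ` {a..b}"
        then obtain y where y: "y \<in> {a..b}" "z = \<sigma> y" by auto
        have "int (\<sigma> (a + (y - a))) = int (\<sigma> a) + int (y - a)" using L[of "y - a"] y e1 by auto
        then show "z \<in> {\<sigma> a..\<sigma> a + (b - a)}" using y by auto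
      qed
      show "{\<sigma> a..\<sigma> a + (b - a)} \<subseteq> \<sigma> ` {a..b}"
      proof
        fix z assume z: "z \<in> {\<sigma> a..\<sigma> a + (b - a)}"
        have "int (\<sigma> (a + (z - \<sigma> a))) = int (\<sigma> a) + int (z - \<sigma> a)" using L[of "z - \<sigma> a"] z e1 by auto
        then have "\<sigma> (a + (z - \<sigma> a)) = z" using z by auto
        moreover have "a + (z - \<sigma> a) \<in> {a..b}" using z ab by auto
        ultimately show "z \<in> \<sigma> ` {a..b}" by (metis imageI)
      qed
    qed
    then show ?thesis by (intro exI[of _ "\<sigma> a"] exI[of _ "\<sigma> a + (b - a)"]) auto
  next
    assume e1: "e = -1"
    have sb: "int (\<sigma> b) = int (\<sigma> a) - int (b - a)" using L[of "b - a"] e1 ab by auto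
    have "\<sigma> ` {a..b} = {\<sigma> b..\<sigma> a}"
    proof
      show "\<sigma> ` {a..b} \<subseteq> {\<sigma> b..\<sigma> a}"
      proof
        fix z assume "z \<in> \<sigma> ` {a..b}"
        then obtain y where y: "y \<in> {a..b}" "z = \<sigma> y" by auto
        have "int (\<sigma> (a + (y - a))) = int (\<sigma> a) - int (y - a)" using L[of "y - a"] y e1 by auto
        then show "z \<in> {\<sigma> b..\<sigma> a}" using y sb by auto
      qed
      show "{\<sigma> b..\<sigma> a} \<subseteq> \<sigma> ` {a..b}"
      proof
        fix z assume z: "z \<in> {\<sigma> b..\<sigma> a}"
        have "int (\<sigma> (a + (\<sigma> a - z))) = int (\<sigma> a) - int (\<sigma> a - z)" using L[of "\<sigma> a - z"] z e1 sb by auto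
        then have "\<sigma> (a + (\<sigma> a - z)) = z" using z by auto
        moreover have "a + (\<sigma> a - z) \<in> {a..b}" using z ab sb by auto
        ultimately show "z \<in> \<sigma> ` {a..b}" by (metis imageI)
      qed
    qed
    then show ?thesis using sb by (intro exI[of _ "\<sigma> b"] exI[of _ "\<sigma> a"]) auto
  qed
qed

lemma image_run:
  assumes inj: "inj_on \<sigma> S"
    and adj: "\<forall>i\<in>S. \<forall>j\<in>S. \<bar>int (\<sigma> i) - int (\<sigma> j)\<bar> = 1 \<longleftrightarrow> \<bar>int i - int j\<bar> = 1"
    and R: "R \<in> runs S"
  shows "\<sigma> ` R \<in> runs (\<sigma> ` S)"
proof -
  obtain a b where ab: "a \<le> b" "R = {a..b}" "R \<subseteq> S"
    using runs_D[OF R] by blast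
  obtain c d where cd: "c \<le> d" "\<sigma> ` R = {c..d}"
    using image_run_interval[OF inj adj ab(1)] ab by blast
  have clo: "z \<in> \<sigma> ` R" if zS: "z \<in> \<sigma> ` S" and wR: "w \<in> \<sigma> ` R" and zw: "\<bar>int z - int w\<bar> = 1" for z w
  proof -
    obtain y where y: "y \<in> S" "z = \<sigma> y" using zS by blast
    obtain x where x: "x \<in> R" "w = \<sigma> x" using wR by blast
    have "\<bar>int y - int x\<bar> = 1" using adj y x ab(3) zw by auto
    then have "y \<in> R" using run_closed[OF R x(1) y(1)] by simp
    then show ?thesis using y by auto
  qed
  have "{c..d} \<in> runs (\<sigma> ` S)"
  proof (rule runs_I)
    show "c \<le> d" by fact
    show "{c..d} \<subseteq> \<sigma> ` S" using cd ab by auto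
    show "\<forall>x. Suc x = c \<longrightarrow> x \<notin> \<sigma> ` S"
    proof (intro allI impI notI)
      fix x assume "Suc x = c" "x \<in> \<sigma> ` S"
      then have "x \<in> \<sigma> ` R" using clo[of x c] cd by auto
      then show False using cd \<open>Suc x = c\<close> by auto
    qed
    show "Suc d \<notin> \<sigma> ` S"
    proof
      assume "Suc d \<in> \<sigma> ` S"
      then have "Suc d \<in> \<sigma> ` R" using clo[of "Suc d" d] cd by auto
      then show False using cd by auto
    qed
  qed
  then show ?thesis using cd by simp
qed

lemma runs_image:
  assumes fin: "finite S" and inj: "inj_on \<sigma> S"
    and adj: "\<forall>i\<in>S. \<forall>j\<in>S. \<bar>int (\<sigma> i) - int (\<sigma> j)\<bar> = 1 \<longleftrightarrow> \<bar>int i - int j\<bar> = 1"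
  shows "run_decomp (\<sigma> ` S) = run_decomp S"
proof -
  have eq: "runs (\<sigma> ` S) = (image \<sigma>) ` runs S"
  proof
    show "(image \<sigma>) ` runs S \<subseteq> runs (\<sigma> ` S)" using image_run[OF inj adj] by auto
    show "runs (\<sigma> ` S) \<subseteq> (image \<sigma>) ` runs S"
    proof
      fix R' assume R': "R' \<in> runs (\<sigma> ` S)"
      then obtain z where z: "z \<in> R'" using runs_ne by blast
      then obtain x where x: "x \<in> S" "z = \<sigma> x" using runs_sub[OF R'] by auto
      obtain R where R: "R \<in> runs S" "x \<in> R" using runs_ex[OF fin x(1)] by blast
      have "\<sigma> ` R \<in> runs (\<sigma> ` S)" using image_run[OF inj adj R(1)] .
      then have "R' = \<sigma> ` R" using runs_disj[OF R' _ z] x R by auto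
      then show "R' \<in> (image \<sigma>) ` runs S" using R by auto
    qed
  qed
  have injI: "inj_on (image \<sigma>) (runs S)"
  proof (rule inj_onI)
    fix R1 R2 assume R: "R1 \<in> runs S" "R2 \<in> runs S" "\<sigma> ` R1 = \<sigma> ` R2"
    obtain x where x: "x \<in> R1" using runs_ne[OF R(1)] by blast
    then have "\<sigma> x \<in> \<sigma> ` R2" using R by auto
    then obtain y where y: "y \<in> R2" "\<sigma> x = \<sigma> y" by auto
    have "x = y" using inj y x R runs_sub by (meson inj_onD subsetD)
    then show "R1 = R2" using runs_disj[OF R(1,2) x] y by simp
  qed
  have cards: "card (\<sigma> ` R) = card R" if "R \<in> runs S" for R
    using card_image inj runs_sub[OF that] inj_on_subset by blast
  have "image_mset card (mset_set (runs (\<sigma> ` S))) = image_mset card (image_mset (image \<sigma>) (mset_set (runs S)))"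
    using eq image_mset_mset_set[OF injI] by simp
  also have "\<dots> = image_mset card (mset_set (runs S))"
    unfolding multiset.map_comp
    by (rule image_mset_cong) (simp add: cards elem_mset_set runs_finite[OF fin])
  finally show ?thesis unfolding run_decomp_def by simp
qed



lemma card_H2_insert:
  assumes "finite U"
  shows "card (H2 U A X (insert i Y)) = card (H2 U A X Y) - card (H2 U A (insert i X) Y)"
proof -
  have "H2 U A X (insert i Y) = H2 U A X Y - H2 U A (insert i X) Y"
    unfolding H2_def by auto
  moreover have "H2 U A (insert i X) Y \<subseteq> H2 U A X Y" unfolding H2_def by auto
  moreover have "finite (H2 U A X Y)" using assms unfolding H2_def by simp
  ultimately show ?thesis by (simp add: card_Diff_subset finite_subset)
qed

lemma dir1:
  assumes finU: "finite U" and harm: "harmonic U A m" and bij: "bij_betw \<sigma> {1..m} {1..m}"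
    and fin: "finite I2"
  shows "I1 \<union> I2 \<subseteq> {1..m} \<Longrightarrow>
    (\<forall>i\<in>I1 \<union> I2. \<forall>j\<in>I1 \<union> I2. \<bar>int (\<sigma> i) - int (\<sigma> j)\<bar> = 1 \<longleftrightarrow> \<bar>int i - int j\<bar> = 1) \<Longrightarrow>
    card (H2 U A I1 I2) = card (H2 U A (\<sigma> ` I1) (\<sigma> ` I2))"
  using fin
proof (induction I2 arbitrary: I1 rule: finite_induct)
  case empty
  have sub: "I1 \<subseteq> {1..m}" using empty by simp
  then have finI: "finite I1" using finite_subset by blast
  have inj: "inj_on \<sigma> I1" using bij sub bij_betw_imp_inj_on inj_on_subset by blast
  have sub2: "\<sigma> ` I1 \<subseteq> {1..m}" using bij sub bij_betw_imp_surj_on by blast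
  have "run_decomp I1 = run_decomp (\<sigma> ` I1)"
    using runs_image[OF finI inj] empty by simp
  then have "card (H1 U A I1) = card (H1 U A (\<sigma> ` I1))"
    using harm sub sub2 unfolding harmonic_def by blast
  then show ?case unfolding H1_def by simp
next
  case (insert i F)
  have a1: "I1 \<union> F \<subseteq> {1..m}" using insert.prems by auto
  have a2: "insert i I1 \<union> F \<subseteq> {1..m}" using insert.prems by auto
  have b1: "\<forall>i\<in>I1 \<union> F. \<forall>j\<in>I1 \<union> F. \<bar>int (\<sigma> i) - int (\<sigma> j)\<bar> = 1 \<longleftrightarrow> \<bar>int i - int j\<bar> = 1"
    using insert.prems(2) by blast
  have b2: "\<forall>ia\<in>insert i I1 \<union> F. \<forall>j\<in>insert i I1 \<union> F. \<bar>int (\<sigma> ia) - int (\<sigma> j)\<bar> = 1 \<longleftrightarrow> \<bar>int ia - int j\<bar> = 1"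
    using insert.prems(2) by blast
  have "card (H2 U A I1 (insert i F)) = card (H2 U A I1 F) - card (H2 U A (insert i I1) F)"
    by (rule card_H2_insert[OF finU])
  also have "\<dots> = card (H2 U A (\<sigma> ` I1) (\<sigma> ` F)) - card (H2 U A (\<sigma> ` insert i I1) (\<sigma> ` F))"
    using insert.IH[OF a1 b1] insert.IH[OF a2 b2] by simp
  also have "\<dots> = card (H2 U A (\<sigma> ` I1) (insert (\<sigma> i) (\<sigma> ` F)))"
    using card_H2_insert[OF finU] by simp
  finally show ?case by simp
qed

lemma mset_bij:
  assumes "finite A"
  shows "finite B \<Longrightarrow> image_mset h (mset_set A) = image_mset h (mset_set B) \<Longrightarrow>
    \<exists>g. bij_betw g A B \<and> (\<forall>x\<in>A. h (g x) = h x)"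
  using assms
proof (induction A arbitrary: B rule: finite_induct)
  case empty
  then have "mset_set B = {#}" by simp
  then have "B = {}" using empty.prems(1) by (simp add: mset_set_empty_iff)
  then show ?case using bij_betw_id[of "{}"] by blast
next
  case (insert x A)
  have "image_mset h (mset_set (insert x A)) = add_mset (h x) (image_mset h (mset_set A))"
    using insert.hyps by simp
  then have "h x \<in># image_mset h (mset_set B)"
    using insert.prems(2) by simp
  then obtain y where y: "y \<in> B" "h y = h x" using insert.prems by auto
  have "mset_set B = add_mset y (mset_set (B - {y}))" using y insert.prems by (simp add: mset_set.remove)
  then have "image_mset h (mset_set A) = image_mset h (mset_set (B - {y}))"
    using insert y by simp
  then obtain g where g: "bij_betw g A (B - {y})" "\<forall>x\<in>A. h (g x) = h x"
    using insert.IH insert.prems by blast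
  define g' where "g' = g(x := y)"
  have "bij_betw g' A (B - {y}) = bij_betw g A (B - {y})"
    by (rule bij_betw_cong) (use insert.hyps in \<open>auto simp: g'_def\<close>)
  then have "bij_betw g' A (B - {y})" using g(1) by simp
  then have "bij_betw g' (A \<union> {x}) ((B - {y}) \<union> {g' x})"
    using notIn_Un_bij_betw3[of x A g' "B - {y}"] insert.hyps unfolding g'_def by simp
  then have "bij_betw g' (insert x A) (insert y (B - {y}))"
    unfolding g'_def by simp
  moreover have "insert y (B - {y}) = B" using y by auto
  moreover have "\<forall>z\<in>insert x A. h (g' z) = h z" using g y insert.hyps unfolding g'_def by auto
  ultimately show ?case by (intro exI[of _ g']) simp
qed

lemma run_minmax: "R \<in> runs S \<Longrightarrow> Min R \<le> Max R \<and> R = {Min R..Max R}"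
proof -
  assume "R \<in> runs S"
  then obtain a b where ab: "a \<le> b" "R = {a..b}" using runs_D by blast
  have "Min {a..b} = a" using ab by (intro Min_eqI) auto
  moreover have "Max {a..b} = b" using ab by (intro Max_eqI) auto
  ultimately show ?thesis using ab by simp
qed



lemma dir2:
  assumes IS: "I \<subseteq> {1..m}" and JS: "J \<subseteq> {1..m}" and rd: "run_decomp I = run_decomp J"
  shows "pair_equiv m I {} J {}"
proof -
  have finI: "finite I" and finJ: "finite J" using IS JS finite_subset by blast+
  have "image_mset card (mset_set (runs I)) = image_mset card (mset_set (runs J))"
    using rd unfolding run_decomp_def by (metis mset_sorted_list_of_multiset rev_rev_ident)
  then obtain g where g: "bij_betw g (runs I) (runs J)" "\<forall>R\<in>runs I. card (g R) = card R"
    using mset_bij[of "runs I" "runs J" card] runs_finite finI finJ by blast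
  have gR: "g R \<in> runs J" if "R \<in> runs I" for R using g(1) that bij_betwE by blast
  define f where "f x = Min (g (rof I x)) + (x - Min (rof I x))" for x
  have fR: "f x = Min (g R) + (x - Min R)" if "R \<in> runs I" "x \<in> R" for R x
    using rof_eq[OF that] f_def by simp
  have fimg: "f ` R = g R" if R: "R \<in> runs I" for R
  proof -
    have mm1: "Min R \<le> Max R" "R = {Min R..Max R}" using run_minmax[OF R] by auto
    have mm2: "Min (g R) \<le> Max (g R)" "g R = {Min (g R)..Max (g R)}" using run_minmax[OF gR[OF R]] by auto
    have "card {Min R..Max R} = card {Min (g R)..Max (g R)}" using g(2) R mm1 mm2 by metis
    then have "Suc (Max R) - Min R = Suc (Max (g R)) - Min (g R)" by (simp only: card_atLeastAtMost)
    then have diff: "Max R - Min R = Max (g R) - Min (g R)" using mm1(1) mm2(1) by linarith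
    show ?thesis
    proof
      show "f ` R \<subseteq> g R"
      proof
        fix z assume "z \<in> f ` R"
        then obtain x where x: "x \<in> R" "z = f x" by auto
        then have "z = Min (g R) + (x - Min R)" using fR R by simp
        moreover have "Min R \<le> x" "x \<le> Max R" using x mm1 by (metis atLeastAtMost_iff)+
        ultimately have "z \<in> {Min (g R)..Max (g R)}" using mm2(1) diff by auto
        then show "z \<in> g R" by (simp only: mm2(2)[symmetric])
      qed
      show "g R \<subseteq> f ` R"
      proof
        fix z assume z: "z \<in> g R"
        then have z2: "Min (g R) \<le> z" "z \<le> Max (g R)" using mm2 by (metis atLeastAtMost_iff)+
        define x where "x = Min R + (z - Min (g R))"
        have "x \<in> {Min R..Max R}" using z2 diff mm1(1) unfolding x_def by auto
        then have xR: "x \<in> R" by (simp only: mm1(2)[symmetric])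
        have "f x = z" using fR[OF R xR] z2 unfolding x_def by simp
        then show "z \<in> f ` R" using xR by blast
      qed
    qed
  qed
  have fI: "f ` I = J"
  proof -
    have "f ` I = f ` \<Union>(runs I)" using runs_Union[OF finI] by simp
    also have "\<dots> = \<Union>((\<lambda>R. f ` R) ` runs I)" by blast
    also have "\<dots> = \<Union>(g ` runs I)" using fimg by simp
    also have "\<dots> = \<Union>(runs J)" using g(1) bij_betw_imp_surj_on by metis
    also have "\<dots> = J" using runs_Union[OF finJ] .
    finally show ?thesis .
  qed
  have rofI: "rof I x \<in> runs I" "x \<in> rof I x" if "x \<in> I" for x using rof_in[OF finI that] by auto
  have same: "int (f x) - int (f y) = int x - int y" if "x \<in> I" "y \<in> I" "rof I x = rof I y" for x y
  proof -
    have "f x = Min (g (rof I x)) + (x - Min (rof I x))" "f y = Min (g (rof I x)) + (y - Min (rof I x))"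
      using fR rofI that by metis+
    moreover have "Min (rof I x) \<le> x" "Min (rof I x) \<le> y"
      using rofI that finite_subset[OF runs_sub finI] by (metis Min_le)+
    ultimately show ?thesis by simp
  qed
  have fin_gx: "f x \<in> g (rof I x)" if "x \<in> I" for x using fimg rofI that by blast
  have ginj: "inj_on g (runs I)" using g(1) bij_betw_imp_inj_on by blast
  have sameg: "rof I x = rof I y" if "x \<in> I" "y \<in> I" "f y \<in> g (rof I x)" for x y
  proof -
    have "g (rof I x) = g (rof I y)"
      using runs_disj[OF gR[OF rofI(1)[OF that(1)]] gR[OF rofI(1)[OF that(2)]] that(3) fin_gx[OF that(2)]] .
    then show ?thesis using ginj rofI that inj_onD by metis
  qed
  have finj: "inj_on f I"
  proof (rule inj_onI)
    fix x y assume xy: "x \<in> I" "y \<in> I" "f x = f y"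
    then have "rof I x = rof I y" using sameg fin_gx by metis
    then show "x = y" using same xy by fastforce
  qed
  have fadj: "\<bar>int (f x) - int (f y)\<bar> = 1 \<longleftrightarrow> \<bar>int x - int y\<bar> = 1" if xy: "x \<in> I" "y \<in> I" for x y
  proof -
    have "rof I x = rof I y" if "\<bar>int (f x) - int (f y)\<bar> = 1 \<or> \<bar>int x - int y\<bar> = 1"
      using that
    proof
      assume a: "\<bar>int (f x) - int (f y)\<bar> = 1"
      have "f y \<in> J" using fI xy by blast
      then have "f y \<in> g (rof I x)"
        using run_closed[OF gR[OF rofI(1)[OF xy(1)]] fin_gx[OF xy(1)]] a by simp
      then show ?thesis using sameg xy by blast
    next
      assume a: "\<bar>int x - int y\<bar> = 1"
      have "y \<in> rof I x" using run_closed[OF rofI(1)[OF xy(1)] rofI(2)[OF xy(1)] xy(2)] a by simp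
      then show ?thesis using rof_eq rofI xy by metis
    qed
    then show ?thesis using same[OF xy] by fastforce
  qed
  have fbij: "bij_betw f I J" using finj fI by (simp add: bij_betw_def)
  have "card ({1..m} - I) = card ({1..m} - J)"
    using bij_betw_same_card[OF fbij] IS JS finI finJ by (simp add: card_Diff_subset)
  then obtain h where h: "bij_betw h ({1..m} - I) ({1..m} - J)"
    using finite_same_card_bij by blast
  define \<sigma> where "\<sigma> x = (if x \<in> I then f x else h x)" for x
  have s1: "bij_betw \<sigma> I J" using fbij by (rule bij_betw_cong[THEN iffD2, rotated]) (simp add: \<sigma>_def)
  have s2: "bij_betw \<sigma> ({1..m} - I) ({1..m} - J)" using h by (rule bij_betw_cong[THEN iffD2, rotated]) (simp add: \<sigma>_def)
  have "bij_betw \<sigma> (I \<union> ({1..m} - I)) (J \<union> ({1..m} - J))"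
    by (rule bij_betw_combine[OF s1 s2]) auto
  moreover have "I \<union> ({1..m} - I) = {1..m}" "J \<union> ({1..m} - J) = {1..m}" using IS JS by auto
  ultimately have sb: "bij_betw \<sigma> {1..m} {1..m}" by simp
  have "\<sigma> ` I = J" using s1 bij_betw_imp_surj_on by blast
  moreover have "\<forall>i\<in>I \<union> {}. \<forall>j\<in>I \<union> {}. \<bar>int (\<sigma> i) - int (\<sigma> j)\<bar> = 1 \<longleftrightarrow> \<bar>int i - int j\<bar> = 1"
    using fadj by (simp add: \<sigma>_def)
  ultimately show ?thesis unfolding pair_equiv_def using sb by blast
qed

theorem lemma3p22:
  fixes U :: "'a set" and A :: "nat \<Rightarrow> 'a set" and m :: nat
  assumes "finite U" and "\<forall>i\<in>{1..m}. A i \<subseteq> U"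
  shows "harmonic U A m \<longleftrightarrow>
    (\<forall>I1 I2 J1 J2. I1 \<subseteq> {1..m} \<longrightarrow> I2 \<subseteq> {1..m} \<longrightarrow> J1 \<subseteq> {1..m} \<longrightarrow> J2 \<subseteq> {1..m} \<longrightarrow>
       I1 \<inter> I2 = {} \<longrightarrow> J1 \<inter> J2 = {} \<longrightarrow> pair_equiv m I1 I2 J1 J2 \<longrightarrow>
       card (H2 U A I1 I2) = card (H2 U A J1 J2))"
proof
  assume harm: "harmonic U A m"
  show "\<forall>I1 I2 J1 J2. I1 \<subseteq> {1..m} \<longrightarrow> I2 \<subseteq> {1..m} \<longrightarrow> J1 \<subseteq> {1..m} \<longrightarrow> J2 \<subseteq> {1..m} \<longrightarrow>
       I1 \<inter> I2 = {} \<longrightarrow> J1 \<inter> J2 = {} \<longrightarrow> pair_equiv m I1 I2 J1 J2 \<longrightarrow>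
       card (H2 U A I1 I2) = card (H2 U A J1 J2)"
  proof (intro allI impI)
    fix I1 I2 J1 J2 :: "nat set"
    assume s: "I1 \<subseteq> {1..m}" "I2 \<subseteq> {1..m}" and pe: "pair_equiv m I1 I2 J1 J2"
    then obtain \<sigma> where \<sigma>: "bij_betw \<sigma> {1..m} {1..m}" "\<sigma> ` I1 = J1" "\<sigma> ` I2 = J2"
      "\<forall>i\<in>I1 \<union> I2. \<forall>j\<in>I1 \<union> I2. \<bar>int (\<sigma> i) - int (\<sigma> j)\<bar> = 1 \<longleftrightarrow> \<bar>int i - int j\<bar> = 1"
      unfolding pair_equiv_def by blast
    have "finite I2" using s finite_subset by blast
    from dir1[OF assms(1) harm \<sigma>(1) this, of I1] s \<sigma>
    show "card (H2 U A I1 I2) = card (H2 U A J1 J2)" by auto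
  qed
next
  assume R: "\<forall>I1 I2 J1 J2. I1 \<subseteq> {1..m} \<longrightarrow> I2 \<subseteq> {1..m} \<longrightarrow> J1 \<subseteq> {1..m} \<longrightarrow> J2 \<subseteq> {1..m} \<longrightarrow>
       I1 \<inter> I2 = {} \<longrightarrow> J1 \<inter> J2 = {} \<longrightarrow> pair_equiv m I1 I2 J1 J2 \<longrightarrow>
       card (H2 U A I1 I2) = card (H2 U A J1 J2)"
  show "harmonic U A m"
    unfolding harmonic_def
  proof (intro allI impI)
    fix I J :: "nat set"
    assume "I \<subseteq> {1..m}" "J \<subseteq> {1..m}" "run_decomp I = run_decomp J"
    then have "pair_equiv m I {} J {}" by (rule dir2)
    then have "card (H2 U A I {}) = card (H2 U A J {})" using R \<open>I \<subseteq> {1..m}\<close> \<open>J \<subseteq> {1..m}\<close> by blast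
    then show "card (H1 U A I) = card (H1 U A J)" unfolding H1_def .
  qed
qed


end
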